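(* Let $\mathcal{A}$ be a finite abelian group with $|\mathcal{A}|\ge 3$. Let $H_1(p_1,p_2)$ denote a graph consisting of a triangle $v_2v_3v_4$, a vertex $v_1$ adjacent to $v_2$, $p_1\ge0$ pendant vertices adjacent to $v_1$, $p_2\ge 0$ pendant vertices adjacent to $v_2$, and $t\ge 1$ further neighbours of $v_1$, each of which is a support vertex all of whose neighbours other than $v_1$ are pendant vertices. Consider the case $p_1=0$. Then $H_1(0,p_2)$ is $\mathcal{A}$-vertex magic if and only if $p_2=0$ and the following holds: if $v_1$ has a weak support neighbour, there exists $g\in\mathcal{A}\setminus\{0\}$ with $d(v_1)\not\equiv 1$, $d(v_1)\not\equiv 2$, $2d(v_1)\not\equiv 2$ and $2d(v_1)\not\equiv 3 \pmod{o(g)}$; and if every support neighbour of $v_1$ is a strong support vertex, there exists $g\in\mathcal{A}\setminus\{0\}$ with $d(v_1)\not\equiv 1$, $d(v_1)\not\equiv 2$ and $2d(v_1)\not\equiv 3\pmod{o(g)}$.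
   Context: A pendant vertex has degree $1$; a support vertex is a vertex adjacent to a pendant vertex; it is a weak support vertex if it is adjacent to exactly one pendant vertex and a strong support vertex if adjacent to at least two. $d(v)$ is the degree of $v$ and $o(g)$ the order of $g$. A map $\ell:V(G)\to\mathcal{A}\setminus\{0\}$ is an $\mathcal{A}$-vertex magic labeling if there is $\mu\in\mathcal{A}$ with $\sum_{u\in N(v)}\ell(u)=\mu$ for every vertex $v$; $G$ is $\mathcal{A}$-vertex magic if such a labeling exists. *)

theory Defs
  imports "HOL-Algebra.Multiplicative_Group" "HOL-Number_Theory.Cong"
begin

definition nbhd :: "'v set \<Rightarrow> ('v \<Rightarrow> 'v \<Rightarrow> bool) \<Rightarrow> 'v \<Rightarrow> 'v set" where
  "nbhd V E v = {u \<in> V. E v u}"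

definition deg :: "'v set \<Rightarrow> ('v \<Rightarrow> 'v \<Rightarrow> bool) \<Rightarrow> 'v \<Rightarrow> nat" where
  "deg V E v = card (nbhd V E v)"

definition pendant :: "'v set \<Rightarrow> ('v \<Rightarrow> 'v \<Rightarrow> bool) \<Rightarrow> 'v \<Rightarrow> bool" where
  "pendant V E v \<longleftrightarrow> v \<in> V \<and> deg V E v = 1"

definition support :: "'v set \<Rightarrow> ('v \<Rightarrow> 'v \<Rightarrow> bool) \<Rightarrow> 'v \<Rightarrow> bool" where
  "support V E v \<longleftrightarrow> v \<in> V \<and> (\<exists>u \<in> nbhd V E v. pendant V E u)"

definition weak_support :: "'v set \<Rightarrow> ('v \<Rightarrow> 'v \<Rightarrow> bool) \<Rightarrow> 'v \<Rightarrow> bool" where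
  "weak_support V E v \<longleftrightarrow> v \<in> V \<and> card {u \<in> nbhd V E v. pendant V E u} = 1"

definition strong_support :: "'v set \<Rightarrow> ('v \<Rightarrow> 'v \<Rightarrow> bool) \<Rightarrow> 'v \<Rightarrow> bool" where
  "strong_support V E v \<longleftrightarrow> v \<in> V \<and> card {u \<in> nbhd V E v. pendant V E u} \<ge> 2"

text \<open>A-vertex magic labelling, for an abelian group G (written multiplicatively in
  HOL-Algebra: the identity \<one> plays the role of 0 and the group product that of the sum).\<close>

definition vertex_magic_labeling ::
  "('a, 'b) monoid_scheme \<Rightarrow> 'v set \<Rightarrow> ('v \<Rightarrow> 'v \<Rightarrow> bool) \<Rightarrow> ('v \<Rightarrow> 'a) \<Rightarrow> bool" where
  "vertex_magic_labeling G V E l \<longleftrightarrow>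
     (\<forall>v \<in> V. l v \<in> carrier G - {\<one>\<^bsub>G\<^esub>}) \<and>
     (\<exists>\<mu> \<in> carrier G. \<forall>v \<in> V. finprod G l (nbhd V E v) = \<mu>)"

definition vertex_magic ::
  "('a, 'b) monoid_scheme \<Rightarrow> 'v set \<Rightarrow> ('v \<Rightarrow> 'v \<Rightarrow> bool) \<Rightarrow> bool" where
  "vertex_magic G V E \<longleftrightarrow> (\<exists>l. vertex_magic_labeling G V E l)"

text \<open>The graph H_1(p1,p2): triangle V2 V3 V4, V1 adjacent to V2, p1 pendants P1 j at V1,
  p2 pendants P2 j at V2, and t further neighbours S i of V1, where S i carries
  q i \<ge> 1 pendant vertices L i j (and no other neighbours).\<close>

datatype hvert = V1 | V2 | V3 | V4 | P1 nat | P2 nat | S nat | L nat nat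

definition H1_verts :: "nat \<Rightarrow> nat \<Rightarrow> nat \<Rightarrow> (nat \<Rightarrow> nat) \<Rightarrow> hvert set" where
  "H1_verts p1 p2 t q = {V1, V2, V3, V4} \<union> {P1 j | j. j < p1} \<union> {P2 j | j. j < p2}
     \<union> {S i | i. i < t} \<union> {L i j | i j. i < t \<and> j < q i}"

definition H1_base :: "nat \<Rightarrow> nat \<Rightarrow> nat \<Rightarrow> (nat \<Rightarrow> nat) \<Rightarrow> hvert \<Rightarrow> hvert \<Rightarrow> bool" where
  "H1_base p1 p2 t q x y \<longleftrightarrow>
     (x = V2 \<and> y = V3) \<or> (x = V3 \<and> y = V4) \<or> (x = V2 \<and> y = V4) \<or> (x = V1 \<and> y = V2) \<or>
     (\<exists>j < p1. x = V1 \<and> y = P1 j) \<or> (\<exists>j < p2. x = V2 \<and> y = P2 j) \<or>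
     (\<exists>i < t. x = V1 \<and> y = S i) \<or> (\<exists>i < t. \<exists>j < q i. x = S i \<and> y = L i j)"

definition H1_adj :: "nat \<Rightarrow> nat \<Rightarrow> nat \<Rightarrow> (nat \<Rightarrow> nat) \<Rightarrow> hvert \<Rightarrow> hvert \<Rightarrow> bool" where
  "H1_adj p1 p2 t q x y \<longleftrightarrow> H1_base p1 p2 t q x y \<or> H1_base p1 p2 t q y x"

end

theory Submission
  imports Defs
begin


abbreviation "VV p2 t q \<equiv> H1_verts 0 p2 t q"
abbreviation "EE p2 t q \<equiv> H1_adj 0 p2 t q"

lemma nb_V1: "nbhd (VV p2 t q) (EE p2 t q) V1 = insert V2 (S ` {..<t})"
  by (auto simp: nbhd_def H1_verts_def H1_adj_def H1_base_def)
lemma nb_V2: "nbhd (VV p2 t q) (EE p2 t q) V2 = {V1, V3, V4} \<union> P2 ` {..<p2}"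
  by (auto simp: nbhd_def H1_verts_def H1_adj_def H1_base_def)
lemma nb_V3: "nbhd (VV p2 t q) (EE p2 t q) V3 = {V2, V4}"
  by (auto simp: nbhd_def H1_verts_def H1_adj_def H1_base_def)
lemma nb_V4: "nbhd (VV p2 t q) (EE p2 t q) V4 = {V2, V3}"
  by (auto simp: nbhd_def H1_verts_def H1_adj_def H1_base_def)
lemma nb_P2: "j < p2 \<Longrightarrow> nbhd (VV p2 t q) (EE p2 t q) (P2 j) = {V2}"
  by (auto simp: nbhd_def H1_verts_def H1_adj_def H1_base_def)
lemma nb_S: "i < t \<Longrightarrow> nbhd (VV p2 t q) (EE p2 t q) (S i) = insert V1 (L i ` {..<q i})"
  by (auto simp: nbhd_def H1_verts_def H1_adj_def H1_base_def)
lemma nb_L: "i < t \<Longrightarrow> j < q i \<Longrightarrow> nbhd (VV p2 t q) (EE p2 t q) (L i j) = {S i}"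
  by (auto simp: nbhd_def H1_verts_def H1_adj_def H1_base_def)
lemma verts_cases: "v \<in> VV p2 t q \<Longrightarrow> v = V1 \<or> v = V2 \<or> v = V3 \<or> v = V4 \<or> (\<exists>j<p2. v = P2 j)
   \<or> (\<exists>i<t. v = S i) \<or> (\<exists>i<t. \<exists>j<q i. v = L i j)"
  by (auto simp: H1_verts_def)
lemma in_verts: "V1 \<in> VV p2 t q" "V2 \<in> VV p2 t q" "V3 \<in> VV p2 t q" "V4 \<in> VV p2 t q"
  "j < p2 \<Longrightarrow> P2 j \<in> VV p2 t q" "i < t \<Longrightarrow> S i \<in> VV p2 t q"
  "i < t \<Longrightarrow> j < q i \<Longrightarrow> L i j \<in> VV p2 t q"
  by (auto simp: H1_verts_def)

lemma deg_V1: "deg (VV p2 t q) (EE p2 t q) V1 = Suc t"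
proof -
  have "V2 \<notin> S ` {..<t}" by auto
  moreover have "card (S ` {..<t}) = t" by (simp add: card_image inj_on_def)
  ultimately show ?thesis by (simp add: deg_def nb_V1)
qed

lemma pend_L: "i < t \<Longrightarrow> j < q i \<Longrightarrow> pendant (VV p2 t q) (EE p2 t q) (L i j)"
  by (simp add: pendant_def deg_def nb_L in_verts)

lemma npend_V1: "t \<ge> 1 \<Longrightarrow> \<not> pendant (VV p2 t q) (EE p2 t q) V1"
  by (simp add: pendant_def deg_V1)
lemma npend_V3: "\<not> pendant (VV p2 t q) (EE p2 t q) V3"
  by (simp add: pendant_def deg_def nb_V3)
lemma npend_V4: "\<not> pendant (VV p2 t q) (EE p2 t q) V4"
  by (simp add: pendant_def deg_def nb_V4)

lemma pend_S: "t \<ge> 1 \<Longrightarrow> i < t \<Longrightarrow> {u \<in> nbhd (VV p2 t q) (EE p2 t q) (S i). pendant (VV p2 t q) (EE p2 t q) u}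
   = L i ` {..<q i}"
  using npend_V1[of t p2 q] by (auto simp: nb_S pend_L)

lemma card_pend_S: "t \<ge> 1 \<Longrightarrow> i < t \<Longrightarrow> card {u \<in> nbhd (VV p2 t q) (EE p2 t q) (S i). pendant (VV p2 t q) (EE p2 t q) u} = q i"
  by (simp add: pend_S card_image inj_on_def)

lemma pend_V2: "t \<ge> 1 \<Longrightarrow> {u \<in> nbhd (VV 0 t q) (EE 0 t q) V2. pendant (VV 0 t q) (EE 0 t q) u} = {}"
  using npend_V1[of t 0 q] npend_V3[of 0 t q] npend_V4[of 0 t q] by (auto simp: nb_V2)

lemma weak_iff: "t \<ge> 1 \<Longrightarrow> (\<exists>u \<in> nbhd (VV 0 t q) (EE 0 t q) V1. weak_support (VV 0 t q) (EE 0 t q) u)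
   \<longleftrightarrow> (\<exists>i<t. q i = 1)"
proof -
  assume t: "t \<ge> 1"
  have "\<not> weak_support (VV 0 t q) (EE 0 t q) V2" unfolding weak_support_def pend_V2[OF t, of q] by simp
  then show ?thesis using card_pend_S[OF t, of _ 0 q]
    by (auto simp: nb_V1 weak_support_def in_verts)
qed

lemma strong_iff: "t \<ge> 1 \<Longrightarrow> \<forall>i<t. q i \<ge> 1 \<Longrightarrow> (\<forall>u \<in> nbhd (VV 0 t q) (EE 0 t q) V1. support (VV 0 t q) (EE 0 t q) u \<longrightarrow> strong_support (VV 0 t q) (EE 0 t q) u)
   \<longleftrightarrow> \<not>(\<exists>i<t. q i = 1)"
proof -
  assume t: "t \<ge> 1" and q: "\<forall>i<t. q i \<ge> 1"
  have nsV2: "\<not> support (VV 0 t q) (EE 0 t q) V2"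
    using pend_V2[of t q] t by (auto simp: support_def)
  have sS: "support (VV 0 t q) (EE 0 t q) (S i)" if "i < t" for i
  proof -
    have "L i 0 \<in> {u \<in> nbhd (VV 0 t q) (EE 0 t q) (S i). pendant (VV 0 t q) (EE 0 t q) u}"
      using pend_S[OF t that, of 0 q] q that by force
    then show ?thesis using that by (auto simp: support_def in_verts)
  qed
  have st: "strong_support (VV 0 t q) (EE 0 t q) (S i) \<longleftrightarrow> q i \<ge> 2" if "i < t" for i
    unfolding strong_support_def card_pend_S[OF t that] using in_verts(6)[OF that] by simp
  have "(\<forall>u \<in> nbhd (VV 0 t q) (EE 0 t q) V1. support (VV 0 t q) (EE 0 t q) u \<longrightarrow> strong_support (VV 0 t q) (EE 0 t q) u)
     \<longleftrightarrow> (\<forall>i<t. strong_support (VV 0 t q) (EE 0 t q) (S i))"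
    unfolding nb_V1 using nsV2 sS by auto
  also have "\<dots> \<longleftrightarrow> (\<forall>i<t. q i \<ge> 2)" using st by auto
  also have "\<dots> \<longleftrightarrow> \<not>(\<exists>i<t. q i = 1)"
  proof
    assume "\<forall>i<t. q i \<ge> 2" then show "\<not>(\<exists>i<t. q i = 1)" by force
  next
    assume "\<not>(\<exists>i<t. q i = 1)" then show "\<forall>i<t. q i \<ge> 2" using q
      by (metis Suc_1 le_antisym not_less_eq_eq One_nat_def)
  qed
  finally show ?thesis .
qed

lemma (in group) solve_pow:
  assumes "\<mu> \<in> carrier G" "b \<in> carrier G" "\<mu> [^] (x::int) \<otimes> b = \<mu>"
  shows "b = \<mu> [^] (1 - x)"
proof -
  have "b = inv (\<mu> [^] x) \<otimes> \<mu>" using assms by (simp add: inv_solve_left)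
  also have "\<dots> = \<mu> [^] (- x) \<otimes> \<mu> [^] (1::int)" using assms by (simp add: int_pow_neg)
  also have "\<dots> = \<mu> [^] (1 - x)" using int_pow_mult[OF assms(1), of "-x" 1] by simp
  finally show ?thesis .
qed

lemma (in comm_group) solve_pow':
  assumes "\<mu> \<in> carrier G" "b \<in> carrier G" "b \<otimes> \<mu> [^] (x::int) = \<mu>"
  shows "b = \<mu> [^] (1 - x)"
  using solve_pow[OF assms(1,2)] assms by (simp add: m_comm)

lemma (in comm_group) fwd:
  assumes t: "t \<ge> 1" and q: "\<forall>i<t. q i \<ge> 1"
    and lab: "vertex_magic_labeling G (VV p2 t q) (EE p2 t q) l"
  shows "p2 = 0 \<and> (\<exists>\<mu> \<in> carrier G - {\<one>}. \<not> int (ord \<mu>) dvd int t \<and>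
     \<not> int (ord \<mu>) dvd (1 - int t) \<and> \<not> int (ord \<mu>) dvd (1 - 2 * int t) \<and>
     ((\<exists>i<t. q i = 1) \<longrightarrow> \<not> int (ord \<mu>) dvd (2 * int t)))"
proof -
  let ?V = "VV p2 t q" and ?E = "EE p2 t q"
  from lab obtain \<mu> where mu: "\<mu> \<in> carrier G" and lc: "\<And>v. v \<in> ?V \<Longrightarrow> l v \<in> carrier G - {\<one>}"
    and eq: "\<And>v. v \<in> ?V \<Longrightarrow> finprod G l (nbhd ?V ?E v) = \<mu>"
    unfolding vertex_magic_labeling_def by blast
  have lcar: "l v \<in> carrier G" if "v \<in> ?V" for v using lc that by blast
  have l1: "l v \<noteq> \<one>" if "v \<in> ?V" for v using lc that by blast
  have lS: "l (S i) = \<mu>" if "i < t" for i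
  proof -
    have "q i \<ge> 1" using q that by blast
    then have "finprod G l (nbhd ?V ?E (L i 0)) = \<mu>" using eq in_verts that by simp
    then show ?thesis using nb_L[OF that, of 0 q p2] \<open>q i \<ge> 1\<close> lcar in_verts that by simp
  qed
  have "\<mu> = l (S 0)" using lS t by simp
  then have mu1: "\<mu> \<noteq> \<one>" using l1 in_verts t by simp
  have "finprod G l (nbhd ?V ?E V1) = \<mu>" using eq in_verts by simp
  moreover have "finprod G l (nbhd ?V ?E V1) = l V2 \<otimes> \<mu> [^] (int t)"
  proof -
    have "finprod G l (S ` {..<t}) = finprod G (\<lambda>i. l (S i)) {..<t}"
      by (rule finprod_reindex) (use lcar in_verts in \<open>auto simp: inj_on_def\<close>)
    also have "\<dots> = finprod G (\<lambda>i. \<mu>) {..<t}" by (rule finprod_cong') (auto simp: lS mu)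
    also have "\<dots> = \<mu> [^] t" using mu by (simp add: finprod_const)
    finally show ?thesis unfolding nb_V1 using lcar in_verts
      by (subst finprod_insert) (auto simp: int_pow_int)
  qed
  ultimately have v2: "l V2 = \<mu> [^] (1 - int t)" using solve_pow' mu lcar in_verts by simp
  have "finprod G l (nbhd ?V ?E V3) = \<mu>" using eq in_verts by simp
  then have "l V2 \<otimes> l V4 = \<mu>" unfolding nb_V3 using lcar in_verts by simp
  then have "l V4 = \<mu> [^] (1 - (1 - int t))" using v2 mu lcar in_verts by (intro solve_pow) auto
  then have v4: "l V4 = \<mu> [^] (int t)" by simp
  have "finprod G l (nbhd ?V ?E V4) = \<mu>" using eq in_verts by simp
  then have "l V2 \<otimes> l V3 = \<mu>" unfolding nb_V4 using lcar in_verts by simp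
  then have "l V3 = \<mu> [^] (1 - (1 - int t))" using v2 mu lcar in_verts by (intro solve_pow) auto
  then have v3: "l V3 = \<mu> [^] (int t)" by simp
  have p20: "p2 = 0"
  proof (rule ccontr)
    assume "p2 \<noteq> 0"
    then have "finprod G l (nbhd ?V ?E (P2 0)) = \<mu>" using eq in_verts by simp
    then have "l V2 = \<mu>" using nb_P2[of 0 p2 t q] \<open>p2 \<noteq> 0\<close> lcar in_verts by simp
    then have "\<mu> \<otimes> l V4 = \<mu>" using \<open>l V2 \<otimes> l V4 = \<mu>\<close> by simp
    then have "l V4 = \<one>" using mu lcar in_verts by (metis r_one right_cancel one_closed m_comm)
    then show False using l1 in_verts by blast
  qed
  have "finprod G l (nbhd ?V ?E V2) = \<mu>" using eq in_verts by simp
  then have "l V1 \<otimes> (l V3 \<otimes> l V4) = \<mu>" unfolding nb_V2 p20 using lcar in_verts by simp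
  moreover have "l V3 \<otimes> l V4 = \<mu> [^] (2 * int t)" using v3 v4 mu by (simp add: int_pow_mult[symmetric])
  ultimately have v1: "l V1 = \<mu> [^] (1 - 2 * int t)" using solve_pow' mu lcar in_verts by simp
  have C4: "\<not> int (ord \<mu>) dvd (2 * int t)" if ex: "\<exists>i<t. q i = 1"
  proof -
    obtain i where i: "i < t" "q i = 1" using ex by blast
    have "finprod G l (nbhd ?V ?E (S i)) = \<mu>" using eq in_verts i by simp
    then have "l V1 \<otimes> l (L i 0) = \<mu>" unfolding nb_S[OF i(1)] using i lcar in_verts
      by (simp add: lessThan_Suc)
    then have "\<mu> [^] (1 - 2 * int t) \<otimes> l (L i 0) = \<mu>" using v1 by simp
    moreover have "l (L i 0) \<in> carrier G" using lcar in_verts(7)[OF i(1)] i(2) by simp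
    ultimately have "l (L i 0) = \<mu> [^] (1 - (1 - 2 * int t))"
      using solve_pow[of \<mu> "l (L i 0)" "1 - 2 * int t"] mu by blast
    then have "l (L i 0) = \<mu> [^] (2 * int t)" by simp
    then show ?thesis using l1[of "L i 0"] in_verts i int_pow_eq_id[OF mu] by simp
  qed
  show ?thesis
    using p20 mu mu1 C4 l1[of V1] l1[of V2] l1[of V3] in_verts v1 v2 v3 int_pow_eq_id[OF mu] by auto
qed

lemma cong_conv:
  fixes t m :: nat assumes "t \<ge> 1"
  shows "[Suc t = 1] (mod m) \<longleftrightarrow> int m dvd int t"
    "[Suc t = 2] (mod m) \<longleftrightarrow> int m dvd (1 - int t)"
    "[2 * Suc t = 2] (mod m) \<longleftrightarrow> int m dvd (2 * int t)"
    "[2 * Suc t = 3] (mod m) \<longleftrightarrow> int m dvd (1 - 2 * int t)"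
proof -
  have e: "[a = b] (mod m) \<longleftrightarrow> int m dvd (int b - int a)" for a b :: nat
  proof -
    have "[a = b] (mod m) \<longleftrightarrow> [int b = int a] (mod int m)" by (simp only: cong_int_iff cong_sym_eq)
    also have "\<dots> \<longleftrightarrow> int m dvd (int b - int a)" by (rule cong_iff_dvd_diff)
    finally show ?thesis .
  qed
  show "[Suc t = 1] (mod m) \<longleftrightarrow> int m dvd int t" unfolding e
    using dvd_minus_iff[of "int m" "int t"] dvd_minus_iff[of "int m" "2 * int t"] by simp
  show "[Suc t = 2] (mod m) \<longleftrightarrow> int m dvd (1 - int t)" unfolding e by simp
  show "[2 * Suc t = 2] (mod m) \<longleftrightarrow> int m dvd (2 * int t)" unfolding e
    using dvd_minus_iff[of "int m" "int t"] dvd_minus_iff[of "int m" "2 * int t"] by simp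
  show "[2 * Suc t = 3] (mod m) \<longleftrightarrow> int m dvd (1 - 2 * int t)" unfolding e by simp
qed


lemma (in comm_group) bwd:
  assumes t: "t \<ge> 1" and q: "\<forall>i<t. q i \<ge> 1" and card3: "card (carrier G) \<ge> 3"
    and g: "g \<in> carrier G" "g \<noteq> \<one>"
    and C1: "\<not> int (ord g) dvd int t" and C2: "\<not> int (ord g) dvd (1 - int t)"
    and C3: "\<not> int (ord g) dvd (1 - 2 * int t)"
    and C4: "(\<exists>i<t. q i = 1) \<longrightarrow> \<not> int (ord g) dvd (2 * int t)"
  shows "vertex_magic G (VV 0 t q) (EE 0 t q)"
proof -
  let ?V = "VV 0 t q" and ?E = "EE 0 t q"
  define x where "x = g [^] (2 * int t)"
  have xc: "x \<in> carrier G" using g by (simp add: x_def)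
  define w where "w n = x \<otimes> inv (g [^] (n - 2))" for n :: nat
  have wc: "w n \<in> carrier G" for n using g xc by (simp add: w_def)
  have exy: "\<exists>y. y \<in> carrier G \<and> y \<noteq> \<one> \<and> y \<noteq> w n" for n
  proof (rule ccontr)
    assume "\<not> ?thesis"
    then have "carrier G \<subseteq> {\<one>, w n}" by blast
    then have "card (carrier G) \<le> card {\<one>, w n}" by (rule card_mono[rotated]) simp
    also have "\<dots> \<le> 2" by (simp add: card_insert_le_m1)
    finally show False using card3 by simp
  qed
  define y where "y n = (SOME y. y \<in> carrier G \<and> y \<noteq> \<one> \<and> y \<noteq> w n)" for n
  have yP: "y n \<in> carrier G \<and> y n \<noteq> \<one> \<and> y n \<noteq> w n" for n
    unfolding y_def by (rule someI_ex) (rule exy)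
  define z where "z n = inv (y n) \<otimes> w n" for n
  have zc: "z n \<in> carrier G" for n using yP wc by (simp add: z_def)
  have z1: "z n \<noteq> \<one>" for n
  proof
    assume a: "z n = \<one>"
    have "w n = y n \<otimes> \<one>" using inv_solve_left'[of "\<one>" "y n" "w n"] yP wc a unfolding z_def by blast
    then show False using yP[of n] wc[of n] by simp
  qed
  have yz: "y n \<otimes> (z n \<otimes> g [^] (n - 2)) = x" for n
  proof -
    have yc: "y n \<in> carrier G" using yP by blast
    have h: "y n \<otimes> (inv (y n) \<otimes> b) = b" if "b \<in> carrier G" for b
      using yc that by (simp add: m_assoc[symmetric])
    show ?thesis using yc g xc h unfolding z_def w_def by (simp add: m_assoc)
  qed
  define l where "l v = (case v of V1 \<Rightarrow> g [^] (1 - 2 * int t) | V2 \<Rightarrow> g [^] (1 - int t)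
     | V3 \<Rightarrow> g [^] int t | V4 \<Rightarrow> g [^] int t | P2 j \<Rightarrow> g | P1 j \<Rightarrow> g | S i \<Rightarrow> g
     | L i j \<Rightarrow> (if q i = 1 then x else if j = 0 then y (q i) else if j = 1 then z (q i) else g))" for v
  have lc: "l v \<in> carrier G" for v
    using g xc yP zc by (cases v) (auto simp: l_def)
  have pw: "g [^] (a::int) \<otimes> g [^] (b::int) = g [^] (a + b)" for a b using g by (simp add: int_pow_mult)
  have l1: "l v \<noteq> \<one>" if "v \<in> ?V" for v
    using verts_cases[OF that] g C1 C2 C3 C4 yP z1 int_pow_eq_id[OF g(1)] q
    by (auto simp: l_def x_def split: if_splits)
  have eqs: "finprod G l (nbhd ?V ?E v) = g" if vV: "v \<in> ?V" for v
  proof -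
    have lP: "l \<in> A \<rightarrow> carrier G" for A using lc by blast
    consider "v = V1" | "v = V2" | "v = V3" | "v = V4" | (S) i where "i < t" "v = S i"
      | (L) i j where "i < t" "j < q i" "v = L i j"
      using verts_cases[OF vV] by auto
    then show ?thesis
    proof cases
      case 1
      have "finprod G l (S ` {..<t}) = finprod G (\<lambda>i. l (S i)) {..<t}"
        by (rule finprod_reindex) (use lc in \<open>auto simp: inj_on_def\<close>)
      also have "\<dots> = finprod G (\<lambda>i. g) {..<t}" by (simp add: l_def)
      also have "\<dots> = g [^] int t" using g by (simp add: finprod_const int_pow_int)
      finally have "finprod G l (S ` {..<t}) = g [^] int t" .
      then show ?thesis unfolding 1 nb_V1 using lc g
        by (subst finprod_insert) (auto simp: l_def pw)
    next
      case 2
      have "finprod G l (nbhd ?V ?E v) = l V1 \<otimes> (l V3 \<otimes> l V4)"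
        unfolding 2 nb_V2 using lc by (simp add: lP)
      also have "\<dots> = g [^] ((1 - 2 * int t) + (int t + int t))" by (simp add: l_def pw)
      also have "\<dots> = g" using g by simp
      finally show ?thesis .
    next
      case 3
      have "finprod G l (nbhd ?V ?E v) = l V2 \<otimes> l V4"
        unfolding 3 nb_V3 using lc by (simp add: lP)
      also have "\<dots> = g [^] ((1 - int t) + int t)" by (simp add: l_def pw)
      also have "\<dots> = g" using g by simp
      finally show ?thesis .
    next
      case 4
      have "finprod G l (nbhd ?V ?E v) = l V2 \<otimes> l V3"
        unfolding 4 nb_V4 using lc by (simp add: lP)
      also have "\<dots> = g [^] ((1 - int t) + int t)" by (simp add: l_def pw)
      also have "\<dots> = g" using g by simp
      finally show ?thesis .
    next
      case (L i j)
      have "finprod G l {S i} = l (S i)" using lc by (simp add: lP)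
      then show ?thesis using nb_L[of i t j q 0] L by (simp add: l_def)
    next
      case (S i)
      have F: "finprod G l (L i ` {..<q i}) = x"
      proof (cases "q i = 1")
        case True
        have "finprod G l {L i 0} = l (L i 0)" using lc by (simp add: lP)
        then show ?thesis using True by (simp add: lessThan_Suc l_def)
      next
        case False
        then have n2: "q i \<ge> 2" using q S by force
        have "{..<q i} = insert 0 (insert 1 {2..<q i})" using n2 by auto
        then have e: "L i ` {..<q i} = insert (L i 0) (insert (L i 1) (L i ` {2..<q i}))" by simp
        have "finprod G l (L i ` {2..<q i}) = finprod G (\<lambda>j. l (L i j)) {2..<q i}"
          by (rule finprod_reindex) (use lc in \<open>auto simp: inj_on_def\<close>)
        also have "\<dots> = finprod G (\<lambda>j. g) {2..<q i}"
          by (rule finprod_cong') (use False g in \<open>auto simp: l_def\<close>)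
        also have "\<dots> = g [^] (q i - 2)" using g by (simp add: finprod_const)
        finally have "finprod G l (L i ` {2..<q i}) = g [^] (q i - 2)" .
        moreover have "finprod G l (insert (L i 0) (insert (L i 1) (L i ` {2..<q i})))
            = l (L i 0) \<otimes> (l (L i 1) \<otimes> finprod G l (L i ` {2..<q i}))"
          using lc by (subst finprod_insert; auto simp: lP)+
        ultimately show ?thesis unfolding e using yz[of "q i"] False
          by (simp add: l_def)
      qed
      show ?thesis unfolding S nb_S[OF S(1)] using lc F g
        by (subst finprod_insert) (auto simp: l_def x_def pw)
    qed
  qed
  have A: "\<forall>v\<in>?V. l v \<in> carrier G - {\<one>}" using lc l1 by blast
  have B: "\<exists>\<mu>\<in>carrier G. \<forall>v\<in>?V. finprod G l (nbhd ?V ?E v) = \<mu>" using eqs g(1) by blast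
  show ?thesis unfolding vertex_magic_def vertex_magic_labeling_def using A B by blast
qed

theorem proposition3p4:
  fixes G :: "('a, 'b) monoid_scheme" and p2 t :: nat and q :: "nat \<Rightarrow> nat"
  assumes "comm_group G" and "finite (carrier G)" and "card (carrier G) \<ge> 3"
    and "t \<ge> 1" and "\<forall>i < t. q i \<ge> 1"
  shows "vertex_magic G (H1_verts 0 p2 t q) (H1_adj 0 p2 t q) \<longleftrightarrow>
    (p2 = 0 \<and>
     ((\<exists>u \<in> nbhd (H1_verts 0 p2 t q) (H1_adj 0 p2 t q) V1.
         weak_support (H1_verts 0 p2 t q) (H1_adj 0 p2 t q) u) \<longrightarrow>
       (\<exists>g \<in> carrier G - {\<one>\<^bsub>G\<^esub>}.
          \<not> [deg (H1_verts 0 p2 t q) (H1_adj 0 p2 t q) V1 = 1] (mod group.ord G g) \<and>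
          \<not> [deg (H1_verts 0 p2 t q) (H1_adj 0 p2 t q) V1 = 2] (mod group.ord G g) \<and>
          \<not> [2 * deg (H1_verts 0 p2 t q) (H1_adj 0 p2 t q) V1 = 2] (mod group.ord G g) \<and>
          \<not> [2 * deg (H1_verts 0 p2 t q) (H1_adj 0 p2 t q) V1 = 3] (mod group.ord G g))) \<and>
     ((\<forall>u \<in> nbhd (H1_verts 0 p2 t q) (H1_adj 0 p2 t q) V1.
         support (H1_verts 0 p2 t q) (H1_adj 0 p2 t q) u \<longrightarrow>
         strong_support (H1_verts 0 p2 t q) (H1_adj 0 p2 t q) u) \<longrightarrow>
       (\<exists>g \<in> carrier G - {\<one>\<^bsub>G\<^esub>}.
          \<not> [deg (H1_verts 0 p2 t q) (H1_adj 0 p2 t q) V1 = 1] (mod group.ord G g) \<and>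
          \<not> [deg (H1_verts 0 p2 t q) (H1_adj 0 p2 t q) V1 = 2] (mod group.ord G g) \<and>
          \<not> [2 * deg (H1_verts 0 p2 t q) (H1_adj 0 p2 t q) V1 = 3] (mod group.ord G g))))"
  (is "?L \<longleftrightarrow> ?R")
proof
  have cg: "comm_group G" by fact
  have t: "t \<ge> 1" and q: "\<forall>i < t. q i \<ge> 1" by fact+
  note cc = cong_conv[OF t]
  assume ?L
  then obtain l where "vertex_magic_labeling G (VV p2 t q) (EE p2 t q) l"
    unfolding vertex_magic_def by blast
  from comm_group.fwd[OF cg t q this] obtain \<mu> where p20: "p2 = 0" and
    mu: "\<mu> \<in> carrier G - {\<one>\<^bsub>G\<^esub>}" "\<not> int (group.ord G \<mu>) dvd int t"
     "\<not> int (group.ord G \<mu>) dvd (1 - int t)" "\<not> int (group.ord G \<mu>) dvd (1 - 2 * int t)"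
     "(\<exists>i<t. q i = 1) \<longrightarrow> \<not> int (group.ord G \<mu>) dvd (2 * int t)" by blast
  show ?R unfolding p20 weak_iff[OF t] strong_iff[OF t q] deg_V1 cc
    using mu by blast
next
  have cg: "comm_group G" by fact
  have t: "t \<ge> 1" and q: "\<forall>i < t. q i \<ge> 1" by fact+
  note cc = cong_conv[OF t]
  assume R: ?R
  then have p20: "p2 = 0" by blast
  have "\<exists>g \<in> carrier G - {\<one>\<^bsub>G\<^esub>}. \<not> int (group.ord G g) dvd int t \<and>
     \<not> int (group.ord G g) dvd (1 - int t) \<and> \<not> int (group.ord G g) dvd (1 - 2 * int t) \<and>
     ((\<exists>i<t. q i = 1) \<longrightarrow> \<not> int (group.ord G g) dvd (2 * int t))"
    using R unfolding p20 weak_iff[OF t] strong_iff[OF t q] deg_V1 cc by blast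
  then obtain g where g: "g \<in> carrier G" "g \<noteq> \<one>\<^bsub>G\<^esub>" and C: "\<not> int (group.ord G g) dvd int t"
     "\<not> int (group.ord G g) dvd (1 - int t)" "\<not> int (group.ord G g) dvd (1 - 2 * int t)"
     "(\<exists>i<t. q i = 1) \<longrightarrow> \<not> int (group.ord G g) dvd (2 * int t)" by blast
  show ?L unfolding p20 by (rule comm_group.bwd[OF cg t q assms(3) g C])
qed

end
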